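(* Let $\Delta$ be a $\Gamma_{m,n}$-semimodule and $x\in\mathbb{Z}$. Then: (1) the number of $m$-generators of $\Delta$ in $[x,x+n)$ equals $g(x-m)-g(x)$; (2) the number of $m$-cogenerators of $\Delta$ in $[x,x+n)$ equals $g(x)-g(x+m)$; (3) the number of $m$-generators of $\Delta$ in $[x,x+n)$ equals the number of $n$-cogenerators of $\Delta$ in $[x-m,x)$.
   Context: Let $m,n$ be coprime positive integers and $\Gamma_{m,n}=\{am+bn:a,b\in\mathbb{Z}_{\ge0}\}$. A $\Gamma_{m,n}$-semimodule is a subset $\Delta\subset\mathbb{Z}_{\ge0}$ with $\Delta+\Gamma_{m,n}\subset\Delta$. For $p\in\{m,n\}$, a $p$-generator of $\Delta$ is an integer $a\in\Delta$ with $a-p\notin\Delta$, and a $p$-cogenerator is an integer $b\notin\Delta$ with $b+p\in\Delta$. For $y\in\mathbb{Z}$, $g(y)=\#\big(([y,y+n)\cap\mathbb{Z})\setminus\Delta\big)$. Intervals denote sets of integers. *)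

theory Defs
  imports Main
begin

definition Gamma :: "nat \<Rightarrow> nat \<Rightarrow> int set" where
  "Gamma m n = {int (a * m + b * n) | a b. True}"

definition semimodule :: "nat \<Rightarrow> nat \<Rightarrow> int set \<Rightarrow> bool" where
  "semimodule m n D \<longleftrightarrow> D \<subseteq> {0..} \<and> (\<forall>d\<in>D. \<forall>s\<in>Gamma m n. d + s \<in> D)"

definition is_gen :: "int set \<Rightarrow> nat \<Rightarrow> int \<Rightarrow> bool" where
  "is_gen D p a \<longleftrightarrow> a \<in> D \<and> a - int p \<notin> D"

definition is_cogen :: "int set \<Rightarrow> nat \<Rightarrow> int \<Rightarrow> bool" where
  "is_cogen D p b \<longleftrightarrow> b \<notin> D \<and> b + int p \<in> D"

definition gfun :: "int set \<Rightarrow> nat \<Rightarrow> int \<Rightarrow> nat" where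
  "gfun D n y = card ({y..<y + int n} - D)"

end

theory Submission
  imports Defs
begin

lemma closed_add:
  assumes "semimodule m n D" "d \<in> D"
  shows "d + int m \<in> D" "d + int n \<in> D"
proof -
  have "int m \<in> Gamma m n" unfolding Gamma_def by (rule CollectI, rule exI[of _ 1], rule exI[of _ 0]) simp
  moreover have "int n \<in> Gamma m n" unfolding Gamma_def by (rule CollectI, rule exI[of _ 0], rule exI[of _ 1]) simp
  ultimately show "d + int m \<in> D" "d + int n \<in> D" using assms unfolding semimodule_def by auto
qed

lemma gfun_shift:
  "gfun D n (x + c) = card {a \<in> {x..<x + int n}. a + c \<notin> D}"
proof -
  have "{x + c..<x + c + int n} - D = (\<lambda>a. a + c) ` {a \<in> {x..<x + int n}. a + c \<notin> D}"
    apply (auto simp: image_iff)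
    subgoal for z by (rule exI[of _ "z - c"]) auto
    done
  moreover have "inj_on (\<lambda>a. a + c) {a \<in> {x..<x + int n}. a + c \<notin> D}" by (auto simp: inj_on_def)
  ultimately show ?thesis unfolding gfun_def by (simp add: card_image)
qed

lemma gfun_step:
  assumes "semimodule m n D" "n > 0"
  shows "int (gfun D n y) = int (gfun D n (y + 1)) + (if is_cogen D n y then 1 else 0)"
proof -
  define A where "A = {y+1..<y + int n} - D"
  have fA: "finite A" unfolding A_def by simp
  have i1: "{y..<y + int n} = insert y {y+1..<y + int n}" using assms(2) by auto
  have i2: "{y+1..<y + 1 + int n} = insert (y + int n) {y+1..<y + int n}" using assms(2) by auto
  have e1: "{y..<y + int n} - D = (if y \<in> D then A else insert y A)"
    unfolding A_def i1 by auto
  have e2: "{y+1..<y + 1 + int n} - D = (if y + int n \<in> D then A else insert (y + int n) A)"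
    unfolding A_def i2 by auto
  have yA: "y \<notin> A" "y + int n \<notin> A" unfolding A_def by auto
  have "y \<in> D \<Longrightarrow> y + int n \<in> D" using closed_add[OF assms(1)] by blast
  then show ?thesis unfolding gfun_def is_cogen_def e1 e2 using fA yA by auto
qed

lemma telescope:
  assumes "semimodule m n D" "n > 0"
  shows "int (gfun D n (x - int k)) = int (gfun D n x) + int (card {b \<in> {x - int k..<x}. is_cogen D n b})"
proof (induction k)
  case 0
  then show ?case by simp
next
  case (Suc k)
  define p where "p = x - int (Suc k)"
  define S where "S = {b \<in> {x - int k..<x}. is_cogen D n b}"
  have pk: "x - int k = p + 1" unfolding p_def by simp
  have iv: "{p..<x} = insert p {p+1..<x}" unfolding p_def by auto
  have s: "{b \<in> {p..<x}. is_cogen D n b} = (if is_cogen D n p then insert p S else S)"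
    unfolding S_def pk iv by auto
  have pS: "p \<notin> S" unfolding S_def pk by simp
  have fS: "finite S" unfolding S_def by (rule finite_subset[of _ "{x - int k..<x}"]) auto
  have cs: "int (card {b \<in> {p..<x}. is_cogen D n b}) = int (card S) + (if is_cogen D n p then 1 else 0)"
    unfolding s using pS fS by simp
  have st: "int (gfun D n p) = int (gfun D n (x - int k)) + (if is_cogen D n p then 1 else 0)"
    using gfun_step[OF assms, of p] pk by simp
  show ?case using Suc.IH st cs unfolding p_def[symmetric] S_def[symmetric] by simp
qed

theorem mainTheorem13:
  fixes m n :: nat and D :: "int set" and x :: int
  assumes "m > 0" "n > 0" "coprime m n" "semimodule m n D"
  shows "(int (card {a \<in> {x..<x + int n}. is_gen D m a})
           = int (gfun D n (x - int m)) - int (gfun D n x))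
         \<and> (int (card {b \<in> {x..<x + int n}. is_cogen D m b})
           = int (gfun D n x) - int (gfun D n (x + int m)))
         \<and> (card {a \<in> {x..<x + int n}. is_gen D m a}
           = card {b \<in> {x - int m..<x}. is_cogen D n b})"
proof -
  have cl: "\<And>d. d \<in> D \<Longrightarrow> d + int m \<in> D" using closed_add[OF assms(4)] by blast
  have fin: "\<And>P. finite {a \<in> {x..<x + int n}. P a}" by (rule finite_subset[of _ "{x..<x + int n}"]) auto
  have g0: "gfun D n x = card {a \<in> {x..<x + int n}. a \<notin> D}"
    unfolding gfun_def by (rule arg_cong[where f=card]) auto
  have u1: "{a \<in> {x..<x + int n}. a + - int m \<notin> D} = {a \<in> {x..<x + int n}. a \<notin> D} \<union> {a \<in> {x..<x + int n}. is_gen D m a}"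
    unfolding is_gen_def using cl[of "_ - int m"] by auto
  have c1: "gfun D n (x - int m) = gfun D n x + card {a \<in> {x..<x + int n}. is_gen D m a}"
  proof -
    have "gfun D n (x - int m) = card ({a \<in> {x..<x + int n}. a \<notin> D} \<union> {a \<in> {x..<x + int n}. is_gen D m a})"
      using gfun_shift[of D n x "- int m"] u1 by simp
    also have "\<dots> = card {a \<in> {x..<x + int n}. a \<notin> D} + card {a \<in> {x..<x + int n}. is_gen D m a}"
      by (rule card_Un_disjoint[OF fin fin]) (auto simp: is_gen_def)
    finally show ?thesis using g0 by simp
  qed
  have u2: "{a \<in> {x..<x + int n}. a \<notin> D} = {a \<in> {x..<x + int n}. a + int m \<notin> D} \<union> {a \<in> {x..<x + int n}. is_cogen D m a}"
    unfolding is_cogen_def using cl by auto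
  have c2: "gfun D n x = gfun D n (x + int m) + card {a \<in> {x..<x + int n}. is_cogen D m a}"
  proof -
    have "gfun D n x = card ({a \<in> {x..<x + int n}. a + int m \<notin> D} \<union> {a \<in> {x..<x + int n}. is_cogen D m a})"
      using g0 u2 by simp
    also have "\<dots> = card {a \<in> {x..<x + int n}. a + int m \<notin> D} + card {a \<in> {x..<x + int n}. is_cogen D m a}"
      by (rule card_Un_disjoint[OF fin fin]) (auto simp: is_cogen_def)
    finally show ?thesis using gfun_shift[of D n x "int m"] by simp
  qed
  have c3: "int (gfun D n (x - int m)) = int (gfun D n x) + int (card {b \<in> {x - int m..<x}. is_cogen D n b})" by (rule telescope[OF assms(4) assms(2)])
  show ?thesis using c1 c2 c3 by simp
qed

end
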